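(* Consider the periodic chain (cycle graph) with sites $1,\dots,N$ (indices mod $N$) and let $S^\dagger_{(2)}=\sum_{i=1}^N s_i^\dagger s_{i+1}^\dagger$. For all positive integers $k,R$ there exists $N_0(k,R)$, independent of $N$, such that for every $N>N_0(k,R)$ the following holds: if $H$ is a $k$-local operator of range at most $R$ on the chain with $H|Q^p\rangle=E_p|Q^p\rangle$ for all $p\in\{0,\dots,L\}$, where $|Q^p\rangle=(S^\dagger_{(2)})^p|\overline 0\rangle$ and $L$ is the largest integer with $|Q^L\rangle\ne0$, then there are constants $\Omega,\omega$ with $E_p=\Omega+\omega p$ for all $p\in\{0,\dots,L\}$. (Equivalently, $S^\dagger_{(2)}$ satisfies properties (P.1), (P.2), (P.3) of Theorem 3 for suitable functions $\alpha,\beta,\gamma$ independent of $N$, with (P.1) holding once $N$ is sufficiently large relative to $R$.)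
   Context: Qubits on sites of the cycle with local basis $|0\rangle,|1\rangle$; $s_i^\dagger$ acts on site $i$ as $s^\dagger|0\rangle=|1\rangle$, $s^\dagger|1\rangle=0$, $s_i=(s_i^\dagger)^\dagger$; $|\overline 0\rangle=|0\rangle^{\otimes N}$. Distance is graph distance on the cycle. Every operator has a unique expansion in normal-ordered strings $s^\dagger_{j_1}\cdots s^\dagger_{j_n}s_{k_1}\cdots s_{k_m}$ (the $j$'s pairwise distinct, the $k$'s pairwise distinct); a string has range $R$ where $R$ is the smallest positive integer with all pairwise distances between its sites $<R$; an operator has range at most $R$ if all its strings with nonzero coefficient do, and is $k$-local if each such string involves at most $k$ sites. Operators need not be Hermitian. *)

theory Defs
  imports Complex_Main
begin

text \<open>Sites of the cycle are 0..N-1 (indices mod N). A basis state of the N-qubit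
chain is identified with the set of sites in state |1>; a state vector is a function
from such sets to complex amplitudes (supported on subsets of {0..<N}).\<close>

type_synonym state = "nat set \<Rightarrow> complex"

definition cdist :: "nat \<Rightarrow> nat \<Rightarrow> nat \<Rightarrow> nat" where
  "cdist N i j = min (nat \<bar>int i - int j\<bar>) (N - nat \<bar>int i - int j\<bar>)"

definition sdag :: "nat \<Rightarrow> state \<Rightarrow> state" where
  "sdag i v = (\<lambda>T. if i \<in> T then v (T - {i}) else 0)"

text \<open>Normal-ordered string s^dagger_J s_K (J, K sets of sites) acting on a state:
  s^dagger_J s_K |S> = |(S - K) \<union> J> if K \<subseteq> S and J \<inter> (S - K) = {}, else 0.\<close>
definition apply_string :: "nat set \<Rightarrow> nat set \<Rightarrow> state \<Rightarrow> state" where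
  "apply_string J K v = (\<lambda>T. if J \<subseteq> T \<and> K \<inter> (T - J) = {} then v ((T - J) \<union> K) else 0)"

text \<open>An operator on the chain, given by its (unique) normal-ordered expansion
  with coefficients c J K.\<close>
definition op_of :: "nat \<Rightarrow> (nat set \<Rightarrow> nat set \<Rightarrow> complex) \<Rightarrow> state \<Rightarrow> state" where
  "op_of N c v = (\<lambda>T. \<Sum>J\<in>Pow {0..<N}. \<Sum>K\<in>Pow {0..<N}. c J K * apply_string J K v T)"

definition local_range :: "nat \<Rightarrow> nat \<Rightarrow> nat \<Rightarrow> (nat set \<Rightarrow> nat set \<Rightarrow> complex) \<Rightarrow> bool" where
  "local_range N k R c \<longleftrightarrow>
     (\<forall>J K. J \<subseteq> {0..<N} \<longrightarrow> K \<subseteq> {0..<N} \<longrightarrow> c J K \<noteq> 0 \<longrightarrow>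
        card (J \<union> K) \<le> k \<and> (\<forall>i\<in>J \<union> K. \<forall>j\<in>J \<union> K. cdist N i j < R))"

definition S2 :: "nat \<Rightarrow> state \<Rightarrow> state" where
  "S2 N v = (\<lambda>T. \<Sum>i<N. sdag i (sdag ((i + 1) mod N) v) T)"

definition vac :: state where
  "vac = (\<lambda>S. if S = {} then 1 else 0)"

definition Qst :: "nat \<Rightarrow> nat \<Rightarrow> state" where
  "Qst N p = (S2 N ^^ p) vac"

definition Lmax :: "nat \<Rightarrow> nat" where
  "Lmax N = (GREATEST p. Qst N p \<noteq> (\<lambda>_. 0))"

end

theory Submission
  imports Defs
begin

datatype m2 = M2 (m00: complex) (m01: complex) (m10: complex) (m11: complex)

lemma m2_eqI: "m00 A = m00 B \<Longrightarrow> m01 A = m01 B \<Longrightarrow> m10 A = m10 B \<Longrightarrow> m11 A = m11 B \<Longrightarrow> A = B"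
  by (cases A; cases B) auto

instantiation m2 :: ring_1
begin
definition "0 = M2 0 0 0 0"
definition "1 = M2 1 0 0 1"
definition "A + B = M2 (m00 A + m00 B) (m01 A + m01 B) (m10 A + m10 B) (m11 A + m11 B)"
definition "A - B = M2 (m00 A - m00 B) (m01 A - m01 B) (m10 A - m10 B) (m11 A - m11 B)"
definition "- A = M2 (- m00 A) (- m01 A) (- m10 A) (- m11 A)"
definition "A * B = M2 (m00 A * m00 B + m01 A * m10 B) (m00 A * m01 B + m01 A * m11 B)
                      (m10 A * m00 B + m11 A * m10 B) (m10 A * m01 B + m11 A * m11 B)"
instance
  by standard (auto intro!: m2_eqI simp: zero_m2_def one_m2_def plus_m2_def minus_m2_def
      uminus_m2_def times_m2_def algebra_simps)
end

lemma m2_sel_simps[simp]: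
  "m00 0 = 0" "m01 0 = 0" "m10 0 = 0" "m11 0 = 0"
  "m00 1 = 1" "m01 1 = 0" "m10 1 = 0" "m11 1 = 1"
  "m00 (A + B) = m00 A + m00 B" "m01 (A + B) = m01 A + m01 B"
  "m10 (A + B) = m10 A + m10 B" "m11 (A + B) = m11 A + m11 B"
  "m00 (A * B) = m00 A * m00 B + m01 A * m10 B" "m01 (A * B) = m00 A * m01 B + m01 A * m11 B"
  "m10 (A * B) = m10 A * m00 B + m11 A * m10 B" "m11 (A * B) = m10 A * m01 B + m11 A * m11 B"
  by (simp_all add: zero_m2_def one_m2_def plus_m2_def times_m2_def)

definition tr :: "m2 \<Rightarrow> complex" where "tr A = m00 A + m11 A"

lemma tr_0[simp]: "tr 0 = 0" by (simp add: tr_def)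
lemma tr_add: "tr (A + B) = tr A + tr B" by (simp add: tr_def)
lemma tr_comm: "tr (A * B) = tr (B * A)" by (simp add: tr_def algebra_simps)
lemma tr_sum: "tr (sum f S) = sum (\<lambda>x. tr (f x)) S"
  by (induction S rule: infinite_finite_induct) (auto simp: tr_add tr_def)

definition Xm :: m2 where "Xm = M2 0 1 1 0"
definition P0 :: m2 where "P0 = M2 1 0 0 0"
definition P1 :: m2 where "P1 = M2 0 0 0 1"

lemma Xm_sq: "Xm * Xm = 1" by (rule m2_eqI) (simp_all add: Xm_def)
lemma Xm_pow: "Xm ^ n = (if even n then 1 else Xm)"
  by (induction n) (auto simp: Xm_sq)
lemma P0_sq: "P0 * P0 = P0" by (rule m2_eqI) (simp_all add: P0_def)
lemma P0P1: "P0 * P1 = 0" "P1 * P0 = 0" by (rule m2_eqI; simp add: P0_def P1_def)+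
lemma XP1X: "Xm * P1 * Xm = P0" by (rule m2_eqI) (simp_all add: P0_def P1_def Xm_def)
lemma XP0X: "Xm * P0 * Xm = P1" by (rule m2_eqI) (simp_all add: P0_def P1_def Xm_def)
lemma P1X_XP1: "P1 * Xm + Xm * P1 = Xm" by (rule m2_eqI) (simp_all add: P1_def Xm_def)
lemma P0_P1: "P0 + P1 = 1" by (rule m2_eqI) (simp_all add: P0_def P1_def)
lemma P0XP0: "P0 * Xm * P0 = 0" by (rule m2_eqI) (simp_all add: P0_def Xm_def)
lemma P0AP0: "tr (P0 * A * P0 * Om) = m00 A * tr (P0 * Om)"
  by (simp add: tr_def P0_def algebra_simps)

definition Am :: "bool \<Rightarrow> m2" where "Am b = (if b then Xm else P0)"
definition Mseg :: "nat set \<Rightarrow> nat \<Rightarrow> nat \<Rightarrow> m2" where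
  "Mseg S a b = prod_list (map (\<lambda>i. Am (i \<in> S)) [a..<b])"
definition cnt :: "nat \<Rightarrow> nat set \<Rightarrow> complex" where "cnt N S = tr (Mseg S 0 N)"

lemma Mseg_split: "a \<le> b \<Longrightarrow> b \<le> c \<Longrightarrow> Mseg S a c = Mseg S a b * Mseg S b c"
proof -
  assume "a \<le> b" "b \<le> c"
  then have "[a..<c] = [a..<b] @ [b..<c]" using upt_add_eq_append[of a b "c-b"] by simp
  then show ?thesis unfolding Mseg_def by simp
qed

lemma Mseg_empty[simp]: "Mseg S a a = 1" by (simp add: Mseg_def)

lemma Mseg_Suc: "a \<le> b \<Longrightarrow> Mseg S a (Suc b) = Mseg S a b * Am (b \<in> S)"
  unfolding Mseg_def by simp

lemma Mseg_Suc_left: "a < b \<Longrightarrow> Mseg S a b = Am (a \<in> S) * Mseg S (Suc a) b"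
  unfolding Mseg_def by (simp add: upt_conv_Cons)

lemma Mseg_cong: "(\<And>i. a \<le> i \<Longrightarrow> i < b \<Longrightarrow> (i \<in> S \<longleftrightarrow> i \<in> S')) \<Longrightarrow> Mseg S a b = Mseg S' a b"
  unfolding Mseg_def by (intro arg_cong[where f=prod_list] map_cong) auto

lemma Mseg_full: "(\<And>i. a \<le> i \<Longrightarrow> i < b \<Longrightarrow> i \<in> S) \<Longrightarrow> Mseg S a b = Xm ^ (b - a)"
proof (induction b)
  case 0 then show ?case by (simp add: Mseg_def)
next
  case (Suc b)
  show ?case
  proof (cases "a \<le> b")
    case True
    then have "Mseg S a (Suc b) = Mseg S a b * Am (b \<in> S)" by (rule Mseg_Suc)
    also have "\<dots> = Xm ^ (b - a) * Xm" using Suc True by (simp add: Am_def)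
    also have "\<dots> = Xm ^ (Suc b - a)" using True by (simp add: Suc_diff_le power_commutes)
    finally show ?thesis .
  next
    case False then show ?thesis by (simp add: Mseg_def)
  qed
qed

lemma Mseg_emp: "(\<And>i. a \<le> i \<Longrightarrow> i < b \<Longrightarrow> i \<notin> S) \<Longrightarrow> a < b \<Longrightarrow> Mseg S a b = P0"
proof (induction b)
  case 0 then show ?case by simp
next
  case (Suc b)
  show ?case
  proof (cases "a < b")
    case True
    then have "Mseg S a (Suc b) = Mseg S a b * Am (b \<in> S)" by (simp add: Mseg_Suc)
    also have "\<dots> = P0" using Suc True by (simp add: Am_def P0_sq)
    finally show ?thesis .
  next
    case False
    then have "b = a" using Suc by simp
    then show ?thesis using Suc by (simp add: Mseg_def Am_def)
  qed
qed


lemma tr_P1_P0: "tr (A * P1 * (P0 * B)) = 0" "tr (A * P0 * (P1 * B)) = 0"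
  by (simp_all add: mult.assoc P0P1 flip: mult.assoc[of P1 P0] mult.assoc[of P0 P1])

definition sucN :: "nat \<Rightarrow> nat \<Rightarrow> nat" where "sucN N i = (i + 1) mod N"

definition bnd :: "nat set \<Rightarrow> nat \<Rightarrow> nat \<Rightarrow> complex" where
  "bnd T N j = tr (Mseg T 0 j * P1 * Mseg T j N)"

lemma bnd_notin: assumes "j < N" "j \<notin> T" shows "bnd T N j = 0"
proof -
  have "Mseg T j N = P0 * Mseg T (Suc j) N" using assms by (simp add: Mseg_Suc_left Am_def)
  then show ?thesis unfolding bnd_def using tr_P1_P0(1) by simp
qed

lemma bnd_notin_suc: assumes "j < N" "j \<notin> T" shows "bnd T N (sucN N j) = 0"
proof (cases "Suc j < N")
  case True
  then have s: "sucN N j = Suc j" by (simp add: sucN_def)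
  have "Mseg T 0 (Suc j) = Mseg T 0 j * P0" using assms by (simp add: Mseg_Suc Am_def)
  then have "bnd T N (Suc j) = tr (Mseg T 0 j * P0 * (P1 * Mseg T (Suc j) N))"
    by (simp add: bnd_def mult.assoc)
  then show ?thesis using s tr_P1_P0(2) by simp
next
  case False
  then have N: "N = Suc j" using assms by simp
  then have s: "sucN N j = 0" by (simp add: sucN_def)
  have "Mseg T 0 N = Mseg T 0 j * P0" using assms N by (simp add: Mseg_Suc Am_def)
  then have "bnd T N 0 = tr (P1 * (Mseg T 0 j * P0))" by (simp add: bnd_def)
  also have "\<dots> = tr (Mseg T 0 j * P0 * (P1 * 1))" by (subst tr_comm) simp
  also have "\<dots> = 0" by (rule tr_P1_P0(2))
  finally show ?thesis using s by simp
qed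

lemma bnd_in: assumes "j < N" "j \<in> T" shows "bnd T N j + bnd T N (sucN N j) = cnt N T"
proof -
  define L where "L = Mseg T 0 j"
  define Rr where "Rr = Mseg T (Suc j) N"
  have c: "Mseg T 0 N = L * Xm * Rr" using assms
    by (simp add: L_def Rr_def Mseg_split[of 0 j N] Mseg_Suc_left[of j N] Am_def mult.assoc)
  have b1: "bnd T N j = tr (L * (P1 * Xm) * Rr)" using assms
    by (simp add: bnd_def L_def Rr_def Mseg_Suc_left[of j N] Am_def mult.assoc)
  have b2: "bnd T N (sucN N j) = tr (L * (Xm * P1) * Rr)"
  proof (cases "Suc j < N")
    case True
    then show ?thesis using assms
      by (simp add: sucN_def bnd_def L_def Rr_def Mseg_Suc[of 0 j] Am_def mult.assoc)
  next
    case False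
    then have N: "N = Suc j" using assms by simp
    then have "Rr = 1" by (simp add: Rr_def)
    moreover have "bnd T N (sucN N j) = tr (P1 * (L * Xm))"
      using N assms by (simp add: sucN_def bnd_def L_def Mseg_Suc[of 0 j] Am_def)
    ultimately show ?thesis by (simp add: tr_comm[of P1] mult.assoc)
  qed
  have "bnd T N j + bnd T N (sucN N j) = tr (L * (P1 * Xm + Xm * P1) * Rr)"
    by (simp add: b1 b2 distrib_left distrib_right tr_add)
  then show ?thesis by (simp add: P1X_XP1 cnt_def c)
qed

lemma cnt_remove_pair: assumes "N \<ge> 2" "i < N" "i \<in> T" "sucN N i \<in> T"
  shows "cnt N (T - {i} - {sucN N i}) = bnd T N (sucN N i)"
proof (cases "Suc i < N")
  case True
  let ?T = "T - {i} - {sucN N i}"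
  have s: "sucN N i = Suc i" using True by (simp add: sucN_def)
  have "Mseg ?T 0 N = Mseg ?T 0 i * (Mseg ?T i (Suc (Suc i)) * Mseg ?T (Suc (Suc i)) N)"
    using True by (simp add: Mseg_split[of 0 i N] Mseg_split[of i "Suc (Suc i)" N])
  also have "Mseg ?T 0 i = Mseg T 0 i" by (rule Mseg_cong) (auto simp: s)
  also have "Mseg ?T (Suc (Suc i)) N = Mseg T (Suc (Suc i)) N" by (rule Mseg_cong) (auto simp: s)
  also have "Mseg ?T i (Suc (Suc i)) = P0" by (rule Mseg_emp) (auto simp: s)
  finally have c: "cnt N ?T = tr (Mseg T 0 i * (P0 * Mseg T (Suc (Suc i)) N))" by (simp add: cnt_def)
  have "bnd T N (Suc i) = tr (Mseg T 0 i * Xm * P1 * (Xm * Mseg T (Suc (Suc i)) N))"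
    using True assms s by (simp add: bnd_def Mseg_Suc[of 0 i] Mseg_Suc_left[of "Suc i" N] Am_def)
  also have "\<dots> = tr (Mseg T 0 i * (Xm * P1 * Xm) * Mseg T (Suc (Suc i)) N)" by (simp add: mult.assoc)
  also have "Mseg T 0 i * (Xm * P1 * Xm) * Mseg T (Suc (Suc i)) N = Mseg T 0 i * (P0 * Mseg T (Suc (Suc i)) N)"
    unfolding XP1X by (simp add: mult.assoc)
  finally show ?thesis using c s by simp
next
  case False
  then have N: "N = Suc i" using assms by simp
  then have s: "sucN N i = 0" by (simp add: sucN_def)
  let ?T = "T - {i} - {0}"
  define Mid where "Mid = Mseg T 1 i"
  have i1: "1 \<le> i" using assms N by simp
  have "Mseg ?T 0 N = Mseg ?T 0 1 * Mseg ?T 1 i * Mseg ?T i N"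
  proof -
    have iN: "i \<le> N" "1 \<le> N" using N i1 by auto
    show ?thesis using i1 iN Mseg_split[of 0 1 N ?T] Mseg_split[of 1 i N ?T]
      by (simp add: mult.assoc)
  qed
  also have "Mseg ?T 1 i = Mid" unfolding Mid_def by (rule Mseg_cong) auto
  also have "Mseg ?T 0 1 = P0" by (rule Mseg_emp) auto
  also have "Mseg ?T i N = P0" using N by (intro Mseg_emp) auto
  finally have c: "cnt N ?T = tr (P0 * Mid * P0)" by (simp add: cnt_def s)
  have "tr (P0 * Mid * P0) = tr (P0 * P0 * Mid)" using tr_comm[of "P0 * Mid" P0] by (simp add: mult.assoc)
  then have c2: "cnt N ?T = tr (P0 * Mid)" using c by (simp add: P0_sq)
  have iN: "i \<le> N" "1 \<le> N" using N i1 by auto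
  have "Mseg T 0 N = Mseg T 0 1 * (Mseg T 1 i * Mseg T i N)"
    using Mseg_split[of 0 1 N T] Mseg_split[of 1 i N T] i1 iN by (simp add: mult.assoc)
  moreover have "Mseg T 0 1 = Xm" using assms s by (simp add: Mseg_def Am_def)
  moreover have "Mseg T i N = Xm" using assms N by (simp add: Mseg_def Am_def)
  ultimately have "Mseg T 0 N = Xm * Mid * Xm" by (simp add: Mid_def mult.assoc)
  then have "bnd T N 0 = tr (P1 * Xm * Mid * Xm)" by (simp add: bnd_def mult.assoc)
  also have "\<dots> = tr (Xm * P1 * Xm * Mid)" using tr_comm[of "P1 * Xm * Mid" Xm] by (simp add: mult.assoc)
  finally show ?thesis using c2 s by (simp add: XP1X)
qed

lemma sum_sucN: assumes "N \<ge> 1" shows "(\<Sum>i<N. f (sucN N i)) = (\<Sum>j<N. f j)"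
proof -
  obtain M where N: "N = Suc M" using assms by (cases N) auto
  have "(\<Sum>i<N. f (sucN N i)) = (\<Sum>i<M. f (sucN N i)) + f (sucN N M)" by (simp add: N)
  also have "(\<Sum>i<M. f (sucN N i)) = (\<Sum>i<M. f (Suc i))"
    by (rule sum.cong) (auto simp: sucN_def N)
  also have "f (sucN N M) = f 0" by (simp add: sucN_def N)
  also have "(\<Sum>i<M. f (Suc i)) + f 0 = (\<Sum>j<N. f j)" unfolding N sum.lessThan_Suc_shift by (simp add: add.commute)
  finally show ?thesis .
qed

lemma sum_bnd: assumes "N \<ge> 2" "T \<subseteq> {..<N}"
  shows "2 * (\<Sum>j<N. bnd T N j) = of_nat (card T) * cnt N T"
proof -
  have "(\<Sum>i<N. if i \<in> T then bnd T N i + bnd T N (sucN N i) else 0) = (\<Sum>i<N. if i \<in> T then cnt N T else 0)"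
    by (rule sum.cong) (auto simp: bnd_in)
  also have "\<dots> = of_nat (card T) * cnt N T"
  proof -
    have "{..<N} \<inter> T = T" using assms by auto
    then show ?thesis by (simp add: sum.If_cases)
  qed
  also have "(\<Sum>i<N. if i \<in> T then bnd T N i + bnd T N (sucN N i) else 0) = (\<Sum>i<N. bnd T N i + bnd T N (sucN N i))"
    by (rule sum.cong) (auto simp: bnd_notin bnd_notin_suc)
  also have "\<dots> = (\<Sum>i<N. bnd T N i) + (\<Sum>i<N. bnd T N (sucN N i))" by (simp add: sum.distrib)
  also have "(\<Sum>i<N. bnd T N (sucN N i)) = (\<Sum>i<N. bnd T N i)" using assms by (intro sum_sucN) auto
  finally show ?thesis by simp
qed

lemma cnt_emptyset: "N \<ge> 1 \<Longrightarrow> cnt N {} = 1"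
  by (simp add: cnt_def Mseg_emp tr_def P0_def)

lemma Qst_formula: assumes "N \<ge> 2"
  shows "Qst N p T = (if T \<subseteq> {..<N} \<and> card T = 2 * p then of_nat (fact p) * cnt N T else 0)"
proof (induction p arbitrary: T)
  case 0
  show ?case
  proof (cases "T = {}")
    case True then show ?thesis using assms by (simp add: Qst_def vac_def cnt_emptyset)
  next
    case False
    then have "\<not> (T \<subseteq> {..<N} \<and> card T = 0)" using finite_subset[of T "{..<N}"] by auto
    then show ?thesis using False by (auto simp: Qst_def vac_def)
  qed
next
  case (Suc p)
  have Q0: "Qst N (Suc p) T = S2 N (Qst N p) T" by (simp add: Qst_def)
  have Q: "Qst N (Suc p) T = (\<Sum>i<N. if i \<in> T \<and> sucN N i \<in> T - {i} then Qst N p (T - {i} - {sucN N i}) else 0)"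
    unfolding Q0 S2_def sdag_def sucN_def by (intro sum.cong) auto
  have sne: "sucN N i \<noteq> i" if "i < N" for i
  proof (cases "Suc i < N")
    case True then show ?thesis by (simp add: sucN_def)
  next
    case False
    then have "N = Suc i" using that by simp
    then show ?thesis using assms by (simp add: sucN_def)
  qed
  have sl: "sucN N i < N" for i using assms by (simp add: sucN_def)
  show ?case
  proof (cases "T \<subseteq> {..<N} \<and> card T = 2 * Suc p")
    case True
    then have fin: "finite T" using finite_subset by auto
    have "Qst N (Suc p) T = (\<Sum>i<N. if i \<in> T \<and> sucN N i \<in> T then of_nat (fact p) * bnd T N (sucN N i) else 0)"
      unfolding Q
    proof (rule sum.cong)
      fix i assume i: "i \<in> {..<N}"
      show "(if i \<in> T \<and> sucN N i \<in> T - {i} then Qst N p (T - {i} - {sucN N i}) else 0) =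
        (if i \<in> T \<and> sucN N i \<in> T then of_nat (fact p) * bnd T N (sucN N i) else 0)"
      proof (cases "i \<in> T \<and> sucN N i \<in> T")
        case True2: True
        have "card (T - {i} - {sucN N i}) = 2 * p" using True True2 sne[of i] i fin by auto
        then show ?thesis using True True2 sne[of i] i Suc.IH assms cnt_remove_pair[of N i T] by auto
      next
        case False2: False
        then have "\<not> (i \<in> T \<and> sucN N i \<in> T - {i})" by blast
        with False2 show ?thesis by (simp only: if_False)
      qed
    qed simp
    also have "\<dots> = of_nat (fact p) * (\<Sum>i<N. bnd T N (sucN N i))"
      unfolding sum_distrib_left
      by (rule sum.cong) (auto simp: bnd_notin bnd_notin_suc sl)
    also have "(\<Sum>i<N. bnd T N (sucN N i)) = (\<Sum>i<N. bnd T N i)" using assms by (intro sum_sucN) auto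
    also have "\<dots> = of_nat (Suc p) * cnt N T"
    proof -
      have "2 * (\<Sum>i<N. bnd T N i) = 2 * (of_nat (Suc p) * cnt N T)"
        using sum_bnd[of N T] assms True by (simp add: algebra_simps)
      then show ?thesis by simp
    qed
    finally show ?thesis using True by (simp add: algebra_simps)
  next
    case False
    have "Qst N (Suc p) T = 0" unfolding Q
    proof (rule sum.neutral, intro ballI)
      fix i assume i: "i \<in> {..<N}"
      show "(if i \<in> T \<and> sucN N i \<in> T - {i} then Qst N p (T - {i} - {sucN N i}) else 0) = 0"
      proof (cases "i \<in> T \<and> sucN N i \<in> T - {i}")
        case True2: True
        show ?thesis
        proof (cases "T \<subseteq> {..<N}")
          case True3: True
          then have "finite T" using finite_subset by auto
          then have c1: "card (T - {i} - {sucN N i}) = card T - 1 - 1" using True2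
            by (simp add: card_Diff_singleton_if)
          have "card {i, sucN N i} \<le> card T" using True2 \<open>finite T\<close> by (intro card_mono) auto
          then have "card T \<ge> 2" using True2 by auto
          then have "card (T - {i} - {sucN N i}) \<noteq> 2 * p" using False True3 c1 by auto
          then show ?thesis using True2 Suc.IH by simp
        next
          case False3: False
          then have "\<not> (T - {i} - {sucN N i} \<subseteq> {..<N})" using i sl[of i] by auto
          then show ?thesis using True2 Suc.IH by simp
        qed
      next
        case False2: False
        then show ?thesis by (rule if_not_P)
      qed
    qed
    then show ?thesis by (simp only: if_not_P[OF False])
  qed
qed


lemma card_block: "card {..<(n::nat)} = n" by simp

lemma cnt_block: assumes "2 * p \<le> N" "N \<ge> 1" shows "cnt N {..<2*p} \<noteq> 0"
proof (cases "2 * p < N")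
  case True
  have "Mseg {..<2*p} 0 N = Mseg {..<2*p} 0 (2*p) * Mseg {..<2*p} (2*p) N"
    using True by (intro Mseg_split) auto
  also have "Mseg {..<2*p} 0 (2*p) = Xm ^ (2*p)" using Mseg_full[of 0 "2*p" "{..<2*p}"] by auto
  also have "Mseg {..<2*p} (2*p) N = P0" using True by (intro Mseg_emp) auto
  finally show ?thesis by (simp add: cnt_def Xm_pow tr_def P0_def)
next
  case False
  then have "N = 2 * p" using assms by simp
  then have "Mseg {..<2*p} 0 N = Xm ^ (2*p)" using Mseg_full[of 0 "2*p" "{..<2*p}"] by auto
  then show ?thesis by (simp add: cnt_def Xm_pow tr_def)
qed

lemma Qst_nonzero_iff: assumes "N \<ge> 2" shows "Qst N p \<noteq> (\<lambda>_. 0) \<longleftrightarrow> 2 * p \<le> N"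
proof
  assume "Qst N p \<noteq> (\<lambda>_. 0)"
  then obtain T where "Qst N p T \<noteq> 0" by auto
  then have "T \<subseteq> {..<N}" "card T = 2 * p" using Qst_formula[OF assms] by (auto split: if_splits)
  then show "2 * p \<le> N" using card_mono[of "{..<N}" T] by auto
next
  assume a: "2 * p \<le> N"
  have "Qst N p {..<2*p} \<noteq> 0" using Qst_formula[OF assms] a cnt_block[OF a] assms by auto
  then show "Qst N p \<noteq> (\<lambda>_. 0)" by (metis (mono_tags))
qed

lemma Lmax_eq: assumes "N \<ge> 2" shows "Lmax N = N div 2"
  unfolding Lmax_def
proof (rule Greatest_equality)
  show "Qst N (N div 2) \<noteq> (\<lambda>_. 0)" using Qst_nonzero_iff[OF assms] by simp
  fix y assume "Qst N y \<noteq> (\<lambda>_. 0)"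
  then show "y \<le> N div 2" using Qst_nonzero_iff[OF assms] by simp
qed

definition cond :: "nat set \<Rightarrow> nat set \<Rightarrow> nat set \<Rightarrow> bool" where
  "cond T J K \<longleftrightarrow> J \<subseteq> T \<and> K \<inter> (T - J) = {} \<and> card J = card K"

definition Fc :: "nat \<Rightarrow> (nat set \<Rightarrow> nat set \<Rightarrow> complex) \<Rightarrow> nat set \<Rightarrow> complex" where
  "Fc N c T = (\<Sum>J\<in>Pow {..<N}. \<Sum>K\<in>Pow {..<N}. if cond T J K then c J K * cnt N ((T - J) \<union> K) else 0)"

lemma op_of_Qst: assumes "N \<ge> 2" "T \<subseteq> {..<N}" "card T = 2 * p"
  shows "op_of N c (Qst N p) T = of_nat (fact p) * Fc N c T"
proof -
  have fT: "finite T" using assms finite_subset by auto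
  have "op_of N c (Qst N p) T = (\<Sum>J\<in>Pow {..<N}. \<Sum>K\<in>Pow {..<N}. c J K * apply_string J K (Qst N p) T)"
    by (simp add: op_of_def atLeast0LessThan)
  also have "\<dots> = (\<Sum>J\<in>Pow {..<N}. \<Sum>K\<in>Pow {..<N}. of_nat (fact p) * (if cond T J K then c J K * cnt N ((T - J) \<union> K) else 0))"
  proof (intro sum.cong refl)
    fix J K assume J: "J \<in> Pow {..<N}" and K: "K \<in> Pow {..<N}"
    show "c J K * apply_string J K (Qst N p) T = of_nat (fact p) * (if cond T J K then c J K * cnt N ((T - J) \<union> K) else 0)"
    proof (cases "J \<subseteq> T \<and> K \<inter> (T - J) = {}")
      case True
      have fJ: "finite J" "finite K" using J K finite_subset by auto
      have "card ((T - J) \<union> K) = card T - card J + card K"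
        using True fT fJ by (simp add: card_Un_disjoint card_Diff_subset Int_commute)
      moreover have "card J \<le> card T" using True fT card_mono by auto
      ultimately have ce: "card ((T - J) \<union> K) = 2 * p \<longleftrightarrow> card J = card K" using assms by auto
      have sub: "(T - J) \<union> K \<subseteq> {..<N}" using assms K by auto
      show ?thesis using True ce sub
        by (simp add: apply_string_def Qst_formula[OF assms(1)] cond_def)
    next
      case False
      then show ?thesis by (auto simp: apply_string_def cond_def)
    qed
  qed
  also have "\<dots> = of_nat (fact p) * Fc N c T" by (simp add: Fc_def sum_distrib_left)
  finally show ?thesis .
qed

lemma eigen_Fc: assumes "N \<ge> 2" "\<forall>p \<le> Lmax N. op_of N c (Qst N p) = (\<lambda>T. E p * Qst N p T)"
  "2 * p \<le> N" "T \<subseteq> {..<N}" "card T = 2 * p"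
  shows "Fc N c T = E p * cnt N T"
proof -
  have "p \<le> Lmax N" using assms Lmax_eq by auto
  then have "op_of N c (Qst N p) T = E p * Qst N p T" using assms(2) by metis
  then have "of_nat (fact p) * Fc N c T = of_nat (fact p) * (E p * cnt N T)"
    using op_of_Qst[OF assms(1,4,5)] Qst_formula[OF assms(1)] assms(4,5) by (simp add: algebra_simps)
  then show ?thesis by simp
qed


lemma cdist_local:
  assumes "cdist N i j < R" "a \<le> i" "i < b" "R \<le> a" "b + R \<le> N" "j < N"
  shows "a < j + R \<and> j + 1 < b + R"
proof (cases "i \<le> j")
  case True
  then have e: "nat \<bar>int i - int j\<bar> = j - i" by simp
  show ?thesis using assms(1-6) True unfolding cdist_def e by (auto simp: min_def split: if_splits)
next
  case False
  then have e: "nat \<bar>int i - int j\<bar> = i - j" by simp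
  show ?thesis using assms(1-6) False unfolding cdist_def e by (auto simp: min_def split: if_splits)
qed

definition near :: "nat \<Rightarrow> nat \<Rightarrow> nat set \<Rightarrow> nat set \<Rightarrow> bool" where
  "near a b J K \<longleftrightarrow> (J \<union> K) \<inter> {a..<b} \<noteq> {}"

definition Oseg :: "nat set \<Rightarrow> nat \<Rightarrow> nat \<Rightarrow> nat \<Rightarrow> m2" where
  "Oseg S a b N = Mseg S b N * Mseg S 0 a"

definition Far :: "nat \<Rightarrow> (nat set \<Rightarrow> nat set \<Rightarrow> complex) \<Rightarrow> nat \<Rightarrow> nat \<Rightarrow> nat set \<Rightarrow> m2 \<Rightarrow> complex" where
  "Far N c a b Vout Mi = (\<Sum>J\<in>Pow {..<N}. \<Sum>K\<in>Pow {..<N}.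
     if \<not> near a b J K \<and> cond Vout J K then c J K * tr (Mi * Oseg ((Vout - J) \<union> K) a b N) else 0)"

definition Near :: "nat \<Rightarrow> (nat set \<Rightarrow> nat set \<Rightarrow> complex) \<Rightarrow> nat \<Rightarrow> nat \<Rightarrow> nat \<Rightarrow> nat set \<Rightarrow> m2 \<Rightarrow> complex" where
  "Near N c a b R C Om = (\<Sum>J\<in>Pow {..<N}. \<Sum>K\<in>Pow {..<N}.
     if near a b J K \<and> cond C J K then c J K * tr (Mseg ((C - J) \<union> K) (a - R) (b + R) * Om) else 0)"

lemma cnt_split: "a \<le> b \<Longrightarrow> b \<le> N \<Longrightarrow> cnt N S = tr (Mseg S a b * Oseg S a b N)"
  unfolding cnt_def Oseg_def
  using Mseg_split[of 0 a N S] Mseg_split[of a b N S] tr_comm[of "Mseg S 0 a" "Mseg S a b * Mseg S b N"]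
  by (simp add: mult.assoc)

lemma Oseg_cong: "(\<And>i. i < a \<or> b \<le> i \<and> i < N \<Longrightarrow> (i \<in> S \<longleftrightarrow> i \<in> S')) \<Longrightarrow> Oseg S a b N = Oseg S' a b N"
  unfolding Oseg_def by (intro arg_cong2[where f="(*)"] Mseg_cong) auto

lemma Oseg_diff_cong:
  assumes "V - {a..<b} = V' - {a..<b}" "a' \<le> a" "b \<le> b'"
  shows "Oseg V a' b' N = Oseg V' a' b' N"
proof (rule Oseg_cong)
  fix i assume "i < a' \<or> b' \<le> i \<and> i < N"
  then have "i \<notin> {a..<b}" using assms(2,3) by auto
  then show "i \<in> V \<longleftrightarrow> i \<in> V'" using assms(1) by blast
qed

lemma Far_add: "Far N c a b Vout (B1 + B2) = Far N c a b Vout B1 + Far N c a b Vout B2"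
  unfolding Far_def by (simp add: sum.distrib[symmetric] distrib_right tr_add distrib_left if_distrib cong: if_cong)

lemma if_plus0: "(if P then a else 0) + (if P then b else 0) = (if P then a + b else (0::complex))" by simp

lemma Near_add: "Near N c a b R C (O1 + O2) = Near N c a b R C O1 + Near N c a b R C O2"
  unfolding Near_def by (simp add: sum.distrib[symmetric] distrib_left tr_add if_plus0 cong: if_cong)

lemma local_near:
  assumes lr: "local_range N k R c" and R: "R \<le> a" "b + R \<le> N"
    and J: "J \<in> Pow {..<N}" and K: "K \<in> Pow {..<N}" and c: "c J K \<noteq> 0" and n: "near a b J K"
  shows "J \<union> K \<subseteq> {a + 1 - R..<b + R - 1}"
proof
  fix j assume j: "j \<in> J \<union> K"
  from n obtain i where "i \<in> (J \<union> K) \<inter> {a..<b}" unfolding near_def by blast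
  then have i: "i \<in> J \<union> K" "a \<le> i" "i < b" by auto
  have "cdist N i j < R" using lr J K c i j unfolding local_range_def by (auto simp: atLeast0LessThan)
  moreover have "j < N" using j J K by auto
  ultimately have "a < j + R \<and> j + 1 < b + R" using cdist_local i R by blast
  then show "j \<in> {a + 1 - R..<b + R - 1}" by auto
qed

lemma split_Fc:
  assumes lr: "local_range N k R c" and R: "0 < R" "R \<le> a" "a \<le> b" "b + R \<le> N" and V: "V \<subseteq> {..<N}"
  shows "Fc N c V = Far N c a b (V - {a..<b}) (Mseg V a b)
                   + Near N c a b R (V \<inter> {a - R..<b + R}) (Oseg V (a - R) (b + R) N)"
proof -
  let ?I = "{a..<b}" and ?W = "{a - R..<b + R}"
  have "Fc N c V = (\<Sum>J\<in>Pow {..<N}. \<Sum>K\<in>Pow {..<N}.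
     (if \<not> near a b J K \<and> cond (V - ?I) J K then c J K * tr (Mseg V a b * Oseg (((V - ?I) - J) \<union> K) a b N) else 0)
   + (if near a b J K \<and> cond (V \<inter> ?W) J K then c J K * tr (Mseg (((V \<inter> ?W) - J) \<union> K) (a - R) (b + R) * Oseg V (a - R) (b + R) N) else 0))"
    unfolding Fc_def
  proof (intro sum.cong refl)
    fix J K assume J: "J \<in> Pow {..<N}" and K: "K \<in> Pow {..<N}"
    let ?S = "(V - J) \<union> K"
    show "(if cond V J K then c J K * cnt N ?S else 0) =
     (if \<not> near a b J K \<and> cond (V - ?I) J K then c J K * tr (Mseg V a b * Oseg (((V - ?I) - J) \<union> K) a b N) else 0)
   + (if near a b J K \<and> cond (V \<inter> ?W) J K then c J K * tr (Mseg (((V \<inter> ?W) - J) \<union> K) (a - R) (b + R) * Oseg V (a - R) (b + R) N) else 0)"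
    proof (cases "near a b J K")
      case False
      then have d: "(J \<union> K) \<inter> ?I = {}" by (simp add: near_def)
      have cd: "cond V J K \<longleftrightarrow> cond (V - ?I) J K" using d unfolding cond_def by blast
      have "cnt N ?S = tr (Mseg ?S a b * Oseg ?S a b N)" using R by (intro cnt_split) auto
      also have "Mseg ?S a b = Mseg V a b" using d by (intro Mseg_cong) auto
      also have "Oseg ?S a b N = Oseg (((V - ?I) - J) \<union> K) a b N" by (intro Oseg_cong) auto
      finally show ?thesis using False cd by simp
    next
      case True
      show ?thesis
      proof (cases "c J K = 0")
        case True then show ?thesis by simp
      next
        case False
        have sub: "J \<union> K \<subseteq> {a + 1 - R..<b + R - 1}" using local_near[OF lr R(2) R(4) J K False True] .
        have subW: "J \<subseteq> ?W" "K \<subseteq> ?W" using sub by (auto simp: subset_iff)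
        have cd: "cond V J K \<longleftrightarrow> cond (V \<inter> ?W) J K" using subW unfolding cond_def by blast
        have "cnt N ?S = tr (Mseg ?S (a - R) (b + R) * Oseg ?S (a - R) (b + R) N)" using R by (intro cnt_split) auto
        also have "Mseg ?S (a - R) (b + R) = Mseg (((V \<inter> ?W) - J) \<union> K) (a - R) (b + R)" by (intro Mseg_cong) auto
        also have "Oseg ?S (a - R) (b + R) N = Oseg V (a - R) (b + R) N"
        proof (rule Oseg_cong)
          fix i assume "i < a - R \<or> b + R \<le> i \<and> i < N"
          then have "i \<notin> J" "i \<notin> K" using subW by auto
          then show "i \<in> ?S \<longleftrightarrow> i \<in> V" by auto
        qed
        finally show ?thesis using True cd by simp
      qed
    qed
  qed
  also have "\<dots> = Far N c a b (V - {a..<b}) (Mseg V a b)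
                   + Near N c a b R (V \<inter> {a - R..<b + R}) (Oseg V (a - R) (b + R) N)"
    unfolding Far_def Near_def by (simp add: sum.distrib)
  finally show ?thesis .
qed

definition eigP :: "nat \<Rightarrow> (nat set \<Rightarrow> nat set \<Rightarrow> complex) \<Rightarrow> (nat \<Rightarrow> complex) \<Rightarrow> bool" where
  "eigP N c E \<longleftrightarrow> (\<forall>p T. 2 * p \<le> N \<longrightarrow> T \<subseteq> {..<N} \<longrightarrow> card T = 2 * p \<longrightarrow> Fc N c T = E p * cnt N T)"

lemma GLa:
  assumes lr: "local_range N k R c" and R: "0 < R" "R \<le> a" "a \<le> b" "b + R \<le> N"
    and eig: "eigP N c E"
    and V: "V \<subseteq> {..<N}" "V' \<subseteq> {..<N}" "V - {a..<b} = V' - {a..<b}" "Mseg V a b = Mseg V' a b"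
    and card: "card V = 2 * p" "card V' = 2 * p + 2" "2 * p + 2 \<le> N"
  shows "(E (p + 1) - E p) * cnt N V = Near N c a b R (V' \<inter> {a - R..<b + R}) (Oseg V (a - R) (b + R) N)
                                      - Near N c a b R (V \<inter> {a - R..<b + R}) (Oseg V (a - R) (b + R) N)"
proof -
  have O1: "Oseg V' (a - R) (b + R) N = Oseg V (a - R) (b + R) N"
    using V(3) by (intro Oseg_diff_cong[of V' a b V]) auto
  have O2: "Oseg V' a b N = Oseg V a b N"
    using V(3) by (intro Oseg_diff_cong[of V' a b V]) auto
  have cc: "cnt N V' = cnt N V" using cnt_split[of a b N] R O2 V(4) by simp
  have e1: "Fc N c V = E p * cnt N V" using eig V card unfolding eigP_def by auto
  have e2: "Fc N c V' = E (p + 1) * cnt N V" using eig V card cc unfolding eigP_def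
    by (metis add_mult_distrib2 mult.right_neutral one_add_one)
  have "Fc N c V' - Fc N c V = Near N c a b R (V' \<inter> {a - R..<b + R}) (Oseg V (a - R) (b + R) N)
                                      - Near N c a b R (V \<inter> {a - R..<b + R}) (Oseg V (a - R) (b + R) N)"
    using split_Fc[OF lr R V(1)] split_Fc[OF lr R V(2)] V(3,4) O1 by simp
  then show ?thesis using e1 e2 by (simp add: algebra_simps)
qed

lemma GLb:
  assumes lr: "local_range N k R c" and R: "0 < R" "R \<le> a" "a \<le> b" "b + R \<le> N"
    and eig: "eigP N c E"
    and V: "V0 \<subseteq> {..<N}" "V1 \<subseteq> {..<N}" "V2 \<subseteq> {..<N}"
       "V1 - {a..<b} = V0 - {a..<b}" "V2 - {a..<b} = V0 - {a..<b}"
       "Mseg V0 a b = Mseg V1 a b + Mseg V2 a b"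
    and card: "card V1 = 2 * p" "card V2 = 2 * p" "card V0 = 2 * p + 2" "2 * p + 2 \<le> N"
  shows "E (p + 1) * cnt N V0 - E p * cnt N V1 - E p * cnt N V2 =
           Near N c a b R (V0 \<inter> {a - R..<b + R}) (Oseg V0 (a - R) (b + R) N)
         - Near N c a b R (V1 \<inter> {a - R..<b + R}) (Oseg V0 (a - R) (b + R) N)
         - Near N c a b R (V2 \<inter> {a - R..<b + R}) (Oseg V0 (a - R) (b + R) N)"
proof -
  have O1: "Oseg V1 (a - R) (b + R) N = Oseg V0 (a - R) (b + R) N" "Oseg V2 (a - R) (b + R) N = Oseg V0 (a - R) (b + R) N"
    using V(4,5) by (intro Oseg_diff_cong[of _ a b V0]; auto)+
  have e0: "Fc N c V0 = E (p + 1) * cnt N V0" using eig V card unfolding eigP_def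
    by (metis add_mult_distrib2 mult.right_neutral one_add_one)
  have e1: "Fc N c V1 = E p * cnt N V1" using eig V card unfolding eigP_def by auto
  have e2: "Fc N c V2 = E p * cnt N V2" using eig V card unfolding eigP_def by auto
  have "Far N c a b (V0 - {a..<b}) (Mseg V0 a b) = Far N c a b (V1 - {a..<b}) (Mseg V1 a b) + Far N c a b (V2 - {a..<b}) (Mseg V2 a b)"
    using V(4,5,6) by (simp add: Far_add)
  then have "Fc N c V0 - Fc N c V1 - Fc N c V2 =
           Near N c a b R (V0 \<inter> {a - R..<b + R}) (Oseg V0 (a - R) (b + R) N)
         - Near N c a b R (V1 \<inter> {a - R..<b + R}) (Oseg V0 (a - R) (b + R) N)
         - Near N c a b R (V2 \<inter> {a - R..<b + R}) (Oseg V0 (a - R) (b + R) N)"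
    using split_Fc[OF lr R V(1)] split_Fc[OF lr R V(2)] split_Fc[OF lr R V(3)] O1 V(4,5)
    by (simp add: algebra_simps)
  then show ?thesis using e0 e1 e2 by simp
qed

lemma GLb_cnt:
  assumes "a \<le> b" "b \<le> N" "V1 - {a..<b} = V0 - {a..<b}" "V2 - {a..<b} = V0 - {a..<b}"
       "Mseg V0 a b = Mseg V1 a b + Mseg V2 a b"
  shows "cnt N V0 = cnt N V1 + cnt N V2"
proof -
  have "Oseg V1 a b N = Oseg V0 a b N" "Oseg V2 a b N = Oseg V0 a b N"
    using assms(3,4) by (intro Oseg_diff_cong[of _ a b V0]; auto)+
  then show ?thesis using cnt_split[OF assms(1,2)] assms(5) by (simp add: distrib_right tr_add)
qed


lemma Mseg_one: "Mseg S a (Suc a) = Am (a \<in> S)" by (simp add: Mseg_def)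
lemma Mseg_one': "b = Suc a \<Longrightarrow> Mseg S a b = Am (a \<in> S)" by (simp add: Mseg_def)

definition nu :: "nat \<Rightarrow> (nat set \<Rightarrow> nat set \<Rightarrow> complex) \<Rightarrow> nat \<Rightarrow> nat \<Rightarrow> nat set \<Rightarrow> complex" where
  "nu N c a R C = (\<Sum>J\<in>Pow {..<N}. \<Sum>K\<in>Pow {..<N}.
     if near a (a + 4) J K \<and> cond C J K then c J K * m00 (Mseg ((C - J) \<union> K) (Suc (a - R)) (a + 3 + R)) else 0)"

lemma Near_sparse:
  assumes lr: "local_range N k R c" and R: "0 < R" "R \<le> a" "a + 4 + R \<le> N"
    and C: "C \<subseteq> {Suc (a - R)..<a + 3 + R}"
  shows "Near N c a (a + 4) R C Om = nu N c a R C * tr (P0 * Om)"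
  unfolding Near_def nu_def sum_distrib_right
proof (intro sum.cong refl)
  fix J K assume J: "J \<in> Pow {..<N}" and K: "K \<in> Pow {..<N}"
  show "(if near a (a + 4) J K \<and> cond C J K then c J K * tr (Mseg (C - J \<union> K) (a - R) (a + 4 + R) * Om) else 0) =
        (if near a (a + 4) J K \<and> cond C J K then c J K * m00 (Mseg (C - J \<union> K) (Suc (a - R)) (a + 3 + R)) else 0) * tr (P0 * Om)"
  proof (cases "near a (a + 4) J K \<and> cond C J K \<and> c J K \<noteq> 0")
    case True
    have sub: "J \<union> K \<subseteq> {a + 1 - R..<a + 4 + R - 1}" using local_near[OF lr R(2) R(3) J K] True by auto
    let ?S = "C - J \<union> K"
    have n1: "a - R \<notin> J \<union> K"
    proof
      assume "a - R \<in> J \<union> K"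
      then have "a - R \<in> {a + 1 - R..<a + 4 + R - 1}" using sub by blast
      then show False using R by auto
    qed
    have n2: "a + 3 + R \<notin> J \<union> K"
    proof
      assume "a + 3 + R \<in> J \<union> K"
      then have "a + 3 + R \<in> {a + 1 - R..<a + 4 + R - 1}" using sub by blast
      then show False using R by auto
    qed
    have n3: "a - R \<notin> C" "a + 3 + R \<notin> C" using C R by auto
    have S: "a - R \<notin> ?S" "a + 3 + R \<notin> ?S" using n1 n2 n3 by auto
    have "Mseg ?S (a - R) (a + 4 + R) = Mseg ?S (a - R) (Suc (a - R)) * Mseg ?S (Suc (a - R)) (a + 3 + R) * Mseg ?S (a + 3 + R) (a + 4 + R)"
      using R Mseg_split[of "a - R" "Suc (a - R)" "a + 4 + R" ?S] Mseg_split[of "Suc (a - R)" "a + 3 + R" "a + 4 + R" ?S]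
      by (simp add: mult.assoc)
    also have "Mseg ?S (a - R) (Suc (a - R)) = P0" unfolding Mseg_one Am_def by (rule if_not_P[OF S(1)])
    also have "Mseg ?S (a + 3 + R) (a + 4 + R) = P0"
    proof -
      have e: "a + 4 + R = Suc (a + 3 + R)" by simp
      show ?thesis unfolding e Mseg_one Am_def by (rule if_not_P[OF S(2)])
    qed
    finally show ?thesis using True by (simp add: P0AP0)
  qed auto
qed

lemma Mseg_P0: "a < b \<Longrightarrow> (\<And>i. a \<le> i \<Longrightarrow> i < b \<Longrightarrow> i \<notin> S) \<Longrightarrow> Mseg S a b = P0"
  using Mseg_emp by blast

lemma sparse:
  assumes lr: "local_range N k R c" and R: "0 < R" "R \<le> a" "a + 4 + R \<le> N"
    and eig: "eigP N c E"
    and V: "V \<subseteq> {..<N}" "V \<inter> {a - R..<a + 4 + R} = {}" "card V = 2 * p" "2 * p + 2 \<le> N" "cnt N V \<noteq> 0"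
  shows "E (p + 1) - E p = nu N c a R {a + 1, a + 2} - nu N c a R {}"
proof -
  let ?V' = "V \<union> {a + 1, a + 2}"
  have dj: "V \<inter> {a + 1, a + 2} = {}" using V(2) R by auto
  have fV: "finite V" using V(1) finite_subset by auto
  have cV': "card ?V' = 2 * p + 2" using dj fV V(3) by (simp add: card_Un_disjoint)
  have V'N: "?V' \<subseteq> {..<N}" using V(1) R by auto
  have m1: "Mseg V a (a + 4) = P0" using V(2) R by (intro Mseg_P0) auto
  have "Mseg ?V' a (a + 4) = Mseg ?V' a (Suc a) * Mseg ?V' (Suc a) (Suc (Suc a)) * Mseg ?V' (Suc (Suc a)) (Suc (Suc (Suc a))) * Mseg ?V' (a + 3) (a + 4)"
    using Mseg_split[of a "Suc a" "a + 4" ?V'] Mseg_split[of "Suc a" "Suc (Suc a)" "a + 4" ?V'] Mseg_split[of "Suc (Suc a)" "Suc (Suc (Suc a))" "a + 4" ?V']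
    by (simp add: mult.assoc eval_nat_numeral)
  also have "\<dots> = P0 * Xm * Xm * P0"
  proof -
    have "a \<notin> V" "a + 3 \<notin> V" using V(2) R by auto
    then show ?thesis by (simp add: Mseg_one Am_def eval_nat_numeral)
  qed
  also have "\<dots> = P0" by (simp add: mult.assoc Xm_sq P0_sq)
  finally have m2: "Mseg ?V' a (a + 4) = P0" .
  have diff: "V - {a..<a + 4} = ?V' - {a..<a + 4}" by auto
  have g: "(E (p + 1) - E p) * cnt N V = Near N c a (a + 4) R (?V' \<inter> {a - R..<a + 4 + R}) (Oseg V (a - R) (a + 4 + R) N)
                                      - Near N c a (a + 4) R (V \<inter> {a - R..<a + 4 + R}) (Oseg V (a - R) (a + 4 + R) N)"
    using GLa[OF lr R(1,2) _ R(3) eig V(1) V'N diff _ V(3) cV' V(4)] m1 m2 by simp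
  have i1: "?V' \<inter> {a - R..<a + 4 + R} = {a + 1, a + 2}" using V(2) R by auto
  have i2: "V \<inter> {a - R..<a + 4 + R} = {}" using V(2) .
  have c1: "{a + 1, a + 2} \<subseteq> {Suc (a - R)..<a + 3 + R}" using R by auto
  have cntV: "cnt N V = tr (P0 * Oseg V (a - R) (a + 4 + R) N)"
  proof -
    have "cnt N V = tr (Mseg V (a - R) (a + 4 + R) * Oseg V (a - R) (a + 4 + R) N)" using R by (intro cnt_split) auto
    also have "Mseg V (a - R) (a + 4 + R) = P0" using V(2) R by (intro Mseg_P0) auto
    finally show ?thesis .
  qed
  have "(E (p + 1) - E p) * cnt N V = (nu N c a R {a + 1, a + 2} - nu N c a R {}) * cnt N V"
    using g unfolding i1 i2 Near_sparse[OF lr R c1] Near_sparse[OF lr R empty_subsetI] cntV by (simp add: algebra_simps)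
  then show ?thesis using V(5) by simp
qed

lemma Xm_pow_add2: "Xm ^ (n + 2) = Xm ^ n" by (simp only: power_add power2_eq_square Xm_sq mult_1_right)

lemma Xm_even: "even n \<Longrightarrow> Xm ^ n = 1" by (simp add: Xm_pow)
lemma Xm_odd: "odd n \<Longrightarrow> Xm ^ n = Xm" by (simp add: Xm_pow)

lemma Mseg_fef:
  assumes "a \<le> u" "u < v" "v \<le> b" "\<And>i. a \<le> i \<Longrightarrow> i < u \<Longrightarrow> i \<in> S"
    "\<And>i. u \<le> i \<Longrightarrow> i < v \<Longrightarrow> i \<notin> S" "\<And>i. v \<le> i \<Longrightarrow> i < b \<Longrightarrow> i \<in> S"
  shows "Mseg S a b = Xm ^ (u - a) * P0 * Xm ^ (b - v)"
proof -
  have "Mseg S a b = Mseg S a u * Mseg S u v * Mseg S v b"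
    using assms(1-3) Mseg_split[of a u b S] Mseg_split[of u v b S] by (simp add: mult.assoc)
  also have "Mseg S a u = Xm ^ (u - a)" using assms(4) by (rule Mseg_full)
  also have "Mseg S u v = P0" using assms(5,2) by (rule Mseg_emp)
  also have "Mseg S v b = Xm ^ (b - v)" using assms(6) by (rule Mseg_full)
  finally show ?thesis .
qed

lemma Mseg_ef:
  assumes "a < u" "u \<le> b" "\<And>i. a \<le> i \<Longrightarrow> i < u \<Longrightarrow> i \<notin> S" "\<And>i. u \<le> i \<Longrightarrow> i < b \<Longrightarrow> i \<in> S"
  shows "Mseg S a b = P0 * Xm ^ (b - u)"
proof -
  have "Mseg S a b = Mseg S a u * Mseg S u b" using assms(1,2) by (intro Mseg_split) auto
  also have "Mseg S a u = P0" using assms(3,1) by (rule Mseg_emp)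
  also have "Mseg S u b = Xm ^ (b - u)" using assms(4) by (rule Mseg_full)
  finally show ?thesis .
qed

lemma Mseg_fe:
  assumes "a \<le> u" "u < b" "\<And>i. a \<le> i \<Longrightarrow> i < u \<Longrightarrow> i \<in> S" "\<And>i. u \<le> i \<Longrightarrow> i < b \<Longrightarrow> i \<notin> S"
  shows "Mseg S a b = Xm ^ (u - a) * P0"
proof -
  have "Mseg S a b = Mseg S a u * Mseg S u b" using assms(1,2) by (intro Mseg_split) auto
  also have "Mseg S a u = Xm ^ (u - a)" using assms(3) by (rule Mseg_full)
  also have "Mseg S u b = P0" using assms(4,2) by (rule Mseg_emp)
  finally show ?thesis .
qed

lemma card_interval_diff: "lo \<le> u \<Longrightarrow> u \<le> v \<Longrightarrow> v \<le> hi \<Longrightarrow> card ({lo..<hi} - {u..<v}) = (hi - lo) - (v - u)"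
  by (subst card_Diff_subset) auto

lemma dense_step:
  assumes lr: "local_range N k R c" and R: "0 < R" and eig: "eigP N c E"
    and N: "10 * R + 20 \<le> N" and g: "3 \<le> g" "g \<le> 2 * R + 3" "even (N - g)"
  shows "E ((N - g) div 2 + 1) - E ((N - g) div 2) = nu N c R R {R + 1, R + 2} - nu N c R R {}"
proof -
  define y where "y = 4 * R + 6"
  define a where "a = y - R"
  define b where "b = y + g + R"
  have ab: "R \<le> a" "a \<le> b" "b + R \<le> N" "a - R = y - 2 * R" "b + R = y + g + 2 * R"
    using N g R by (auto simp: a_def b_def y_def)
  have ey: "even y" by (simp add: y_def)
  define C where "C = {a - R..<b + R} - {y..<y + g}"
  define C' where "C' = {a - R..<b + R} - {y..<y + g - 2}"
  define T where "T = {0..<N} - {y..<y + g}"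
  define T' where "T' = {0..<N} - {y..<y + g - 2}"
  define U where "U = {2 * R + 4..<N} - {y..<y + g}"
  define U' where "U' = {2 * R + 4..<N} - {y..<y + g - 2}"
  define Uo where "Uo = {2 * R + 5..<N - 1} - {y..<y + g}"
  define Uo' where "Uo' = {2 * R + 5..<N - 1} - {y..<y + g - 2}"
  have sub: "T \<subseteq> {..<N}" "T' \<subseteq> {..<N}" "U \<subseteq> {..<N}" "U' \<subseteq> {..<N}" "Uo \<subseteq> {..<N}" "Uo' \<subseteq> {..<N}"
    by (auto simp: T_def T'_def U_def U'_def Uo_def Uo'_def)
  have yN: "y + g + 2 * R + 1 \<le> N" using N g by (simp add: y_def)
  have cT: "card T = N - g" "card T' = (N - g) + 2"
    using yN g unfolding T_def T'_def by (subst card_interval_diff; auto)+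
  have cU: "card U = (N - g - 2 * R - 4)" "card U' = (N - g - 2 * R - 4) + 2"
    using yN g unfolding U_def U'_def y_def by (subst card_interval_diff; auto)+
  have cUo: "card Uo = (N - g - 2 * R - 6)" "card Uo' = (N - g - 2 * R - 6) + 2"
    using yN g unfolding Uo_def Uo'_def y_def by (subst card_interval_diff; auto)+
  have gs: "{y..<y + g} \<subseteq> {a..<b}" "{y..<y + g - 2} \<subseteq> {a..<b}" by (auto simp: a_def b_def)
  have dd: "X - G - I = X - I" if "G \<subseteq> I" for X G I :: "nat set" using that by blast
  have dI: "T - {a..<b} = T' - {a..<b}" "U - {a..<b} = U' - {a..<b}" "Uo - {a..<b} = Uo' - {a..<b}"
    unfolding T_def T'_def U_def U'_def Uo_def Uo'_def dd[OF gs(1)] dd[OF gs(2)] by simp_all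
  have inner: "Mseg V a b = Mseg V' a b" if "V \<inter> {a..<b} = {a..<b} - {y..<y + g}" "V' \<inter> {a..<b} = {a..<b} - {y..<y + g - 2}" for V V'
  proof -
    have m1: "i \<in> V \<longleftrightarrow> i \<in> {a..<b} - {y..<y + g}" if "a \<le> i" "i < b" for i
    proof -
      have "i \<in> {a..<b}" using that by simp
      then have "i \<in> V \<longleftrightarrow> i \<in> V \<inter> {a..<b}" by blast
      then show ?thesis using \<open>V \<inter> {a..<b} = {a..<b} - {y..<y + g}\<close> by simp
    qed
    have m2: "i \<in> V' \<longleftrightarrow> i \<in> {a..<b} - {y..<y + g - 2}" if "a \<le> i" "i < b" for i
    proof -
      have "i \<in> {a..<b}" using that by simp
      then have "i \<in> V' \<longleftrightarrow> i \<in> V' \<inter> {a..<b}" by blast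
      then show ?thesis using \<open>V' \<inter> {a..<b} = {a..<b} - {y..<y + g - 2}\<close> by simp
    qed
    have ya: "a \<le> y" "y + g \<le> b" using R by (auto simp: a_def b_def)
    have "Mseg V a b = Xm ^ (y - a) * P0 * Xm ^ (b - (y + g))"
      using g ya by (intro Mseg_fef) (auto simp: m1)
    moreover have "Mseg V' a b = Xm ^ (y - a) * P0 * Xm ^ (b - (y + g - 2))"
      using g ya by (intro Mseg_fef) (auto simp: m2)
    moreover have "Xm ^ (b - (y + g - 2)) = Xm ^ (b - (y + g))"
    proof -
      have eq: "b - (y + g - 2) = (b - (y + g)) + 2" using g by (simp add: b_def)
      show ?thesis unfolding eq by (rule Xm_pow_add2)
    qed
    ultimately show ?thesis by simp
  qed
  have ww: "(X - G) \<inter> W = W - G" if "W \<subseteq> X" for X G W :: "nat set" using that by blast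
  have Isub: "{a..<b} \<subseteq> {0..<N}" "{a..<b} \<subseteq> {2 * R + 4..<N}" "{a..<b} \<subseteq> {2 * R + 5..<N - 1}"
    using ab yN by (auto simp: a_def b_def y_def)
  have Wsub: "{a - R..<b + R} \<subseteq> {0..<N}" "{a - R..<b + R} \<subseteq> {2 * R + 4..<N}" "{a - R..<b + R} \<subseteq> {2 * R + 5..<N - 1}"
    using ab yN by (auto simp: y_def)
  have innT: "Mseg T a b = Mseg T' a b" unfolding T_def T'_def by (intro inner ww Isub)
  have innU: "Mseg U a b = Mseg U' a b" unfolding U_def U'_def by (intro inner ww Isub)
  have innUo: "Mseg Uo a b = Mseg Uo' a b" unfolding Uo_def Uo'_def by (intro inner ww Isub)
  have wT: "T \<inter> {a - R..<b + R} = C" "T' \<inter> {a - R..<b + R} = C'"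
    unfolding T_def T'_def C_def C'_def by (intro ww Wsub)+
  have wU: "U \<inter> {a - R..<b + R} = C" "U' \<inter> {a - R..<b + R} = C'"
    unfolding U_def U'_def C_def C'_def by (intro ww Wsub)+
  have wUo: "Uo \<inter> {a - R..<b + R} = C" "Uo' \<inter> {a - R..<b + R} = C'"
    unfolding Uo_def Uo'_def C_def C'_def by (intro ww Wsub)+
  have ev1: "even (N - (b + R))" using g ey yN ab by (auto simp: b_def)
  have oT: "Oseg T (a - R) (b + R) N = 1"
  proof -
    have h1: "Mseg T (b + R) N = Xm ^ (N - (b + R))" using ab by (intro Mseg_full) (auto simp: T_def)
    have h2: "Mseg T 0 (a - R) = Xm ^ (a - R - 0)" using ab by (intro Mseg_full) (auto simp: T_def y_def)
    have e2: "even (a - R - 0)" using ab ey by simp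
    show ?thesis unfolding Oseg_def h1 h2 Xm_even[OF ev1] Xm_even[OF e2] by simp
  qed
  have oU: "Oseg U (a - R) (b + R) N = P0"
  proof -
    have h1: "Mseg U (b + R) N = Xm ^ (N - (b + R))" using ab by (intro Mseg_full) (auto simp: U_def y_def)
    have h2: "Mseg U 0 (a - R) = P0 * Xm ^ (a - R - (2 * R + 4))"
      using ab by (intro Mseg_ef) (auto simp: U_def y_def)
    have e2: "even (a - R - (2 * R + 4))" using ab by (simp add: y_def)
    show ?thesis unfolding Oseg_def h1 h2 Xm_even[OF ev1] Xm_even[OF e2] by simp
  qed
  have oUo: "Oseg Uo (a - R) (b + R) N = P1"
  proof -
    have h1: "Mseg Uo (b + R) N = Xm ^ (N - 1 - (b + R)) * P0" using ab yN by (intro Mseg_fe) (auto simp: Uo_def y_def)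
    have h2: "Mseg Uo 0 (a - R) = P0 * Xm ^ (a - R - (2 * R + 5))"
      using ab R g yN by (intro Mseg_ef) (auto simp: Uo_def y_def)
    have e2: "odd (a - R - (2 * R + 5))" using ab by (simp add: y_def)
    have e1: "odd (N - 1 - (b + R))" using ev1 yN ab by auto
    have "Xm * P0 * (P0 * Xm) = Xm * (P0 * P0) * Xm" by (simp only: mult.assoc)
    also have "\<dots> = P1" by (simp only: P0_sq XP0X)
    finally have "Xm * P0 * (P0 * Xm) = P1" .
    then show ?thesis unfolding Oseg_def h1 h2 Xm_odd[OF e1] Xm_odd[OF e2] by simp
  qed
  have mW: "Mseg C (a - R) (b + R) = P0"
  proof -
    have h: "Mseg C (a - R) (b + R) = Xm ^ (y - (a - R)) * P0 * Xm ^ (b + R - (y + g))"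
      using ab g by (intro Mseg_fef) (auto simp: C_def a_def b_def)
    have e: "even (y - (a - R))" "even (b + R - (y + g))" using ab by (auto simp: a_def b_def)
    show ?thesis unfolding h Xm_even[OF e(1)] Xm_even[OF e(2)] by simp
  qed
  have cnt_of: "cnt N V = tr (P0 * Oseg V (a - R) (b + R) N)" if "V \<inter> {a - R..<b + R} = C" for V
  proof -
    have "cnt N V = tr (Mseg V (a - R) (b + R) * Oseg V (a - R) (b + R) N)" using ab by (intro cnt_split) auto
    also have "Mseg V (a - R) (b + R) = Mseg C (a - R) (b + R)" using that by (intro Mseg_cong) auto
    finally show ?thesis using mW by simp
  qed
  have cntT: "cnt N T = 1" using cnt_of[OF wT(1)] oT by (simp add: tr_def P0_def)
  have cntU: "cnt N U = 1" using cnt_of[OF wU(1)] oU by (simp add: tr_def P0_def)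
  have cntUo: "cnt N Uo = 0" using cnt_of[OF wUo(1)] oUo by (simp add: tr_def P0_def P1_def)
  define pT where "pT = (N - g) div 2"
  define pU where "pU = (N - g - 2 * R - 4) div 2"
  define pUo where "pUo = (N - g - 2 * R - 6) div 2"
  have pT: "card T = 2 * pT" "card T' = 2 * pT + 2" "2 * pT + 2 \<le> N" using cT g N by (auto simp: pT_def)
  have pU: "card U = 2 * pU" "card U' = 2 * pU + 2" "2 * pU + 2 \<le> N" using cU g N by (auto simp: pU_def)
  have pUo: "card Uo = 2 * pUo" "card Uo' = 2 * pUo + 2" "2 * pUo + 2 \<le> N" using cUo g N by (auto simp: pUo_def)
  have GT: "(E (pT + 1) - E pT) * cnt N T = Near N c a b R C' 1 - Near N c a b R C 1"
    using GLa[OF lr R ab(1,2,3) eig sub(1,2) dI(1) innT pT] wT oT by simp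
  have GU: "(E (pU + 1) - E pU) * cnt N U = Near N c a b R C' P0 - Near N c a b R C P0"
    using GLa[OF lr R ab(1,2,3) eig sub(3,4) dI(2) innU pU] wU oU by simp
  have GUo: "(E (pUo + 1) - E pUo) * cnt N Uo = Near N c a b R C' P1 - Near N c a b R C P1"
    using GLa[OF lr R ab(1,2,3) eig sub(5,6) dI(3) innUo pUo] wUo oUo by simp
  have sp: "E (pU + 1) - E pU = nu N c R R {R + 1, R + 2} - nu N c R R {}"
  proof (rule sparse[OF lr R _ _ eig sub(3) _ pU(1) pU(3)])
    show "R \<le> R" by simp
    show "R + 4 + R \<le> N" using N by simp
    show "U \<inter> {R - R..<R + 4 + R} = {}" by (auto simp: U_def)
    show "cnt N U \<noteq> 0" using cntU by simp
  qed
  have "E (pT + 1) - E pT = (Near N c a b R C' P0 - Near N c a b R C P0) + (Near N c a b R C' P1 - Near N c a b R C P1)"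
    using GT P0_P1 Near_add[of N c a b R C' P0 P1] Near_add[of N c a b R C P0 P1] cntT by simp
  also have "\<dots> = E (pU + 1) - E pU" using GU GUo cntU cntUo by simp
  finally show ?thesis using sp by (simp add: pT_def)
qed


lemma Mseg_fef_int:
  assumes "V \<inter> {a..<b} = {a..<b} - {u..<v}" "a \<le> u" "u < v" "v \<le> b"
  shows "Mseg V a b = Xm ^ (u - a) * P0 * Xm ^ (b - v)"
proof -
  have m: "i \<in> V \<longleftrightarrow> i \<in> {a..<b} - {u..<v}" if "a \<le> i" "i < b" for i
  proof -
    have "i \<in> {a..<b}" using that by simp
    then have "i \<in> V \<longleftrightarrow> i \<in> V \<inter> {a..<b}" by blast
    then show ?thesis using assms(1) by simp
  qed
  show ?thesis using assms(2-4) by (intro Mseg_fef) (auto simp: m)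
qed

lemma Mseg_full_int:
  assumes "V \<inter> {a..<b} = {a..<b}" shows "Mseg V a b = Xm ^ (b - a)"
proof (rule Mseg_full)
  fix i assume "a \<le> i" "i < b"
  then have "i \<in> {a..<b}" by simp
  then show "i \<in> V" using assms by blast
qed

lemma last_step:
  assumes lr: "local_range N k R c" and R: "0 < R" and eig: "eigP N c E"
    and N: "10 * R + 20 \<le> N" "even N"
  shows "E ((N - 2) div 2 + 1) - E ((N - 2) div 2) = nu N c R R {R + 1, R + 2} - nu N c R R {}"
proof -
  define y where "y = 4 * R + 6"
  define a where "a = y - R"
  define b where "b = y + 2 + R"
  have ab: "R \<le> a" "a \<le> b" "b + R \<le> N" using N R by (auto simp: a_def b_def y_def)
  have ey: "even y" by (simp add: y_def)
  have yN: "y + 2 * R + 3 \<le> N" using N by (simp add: y_def)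
  let ?W = "{a - R..<b + R}"
  define G1 where "G1 = {y..<y + 2}"
  define G2 where "G2 = {y - 1..<y + 1}"
  define C0 where "C0 = ?W"
  define C1 where "C1 = ?W - G1"
  define C2 where "C2 = ?W - G2"
  define F where "F = {0..<N}"
  define UF where "UF = {2 * R + 4..<N}"
  define UoF where "UoF = {2 * R + 5..<N - 1}"
  have Gs: "G1 \<subseteq> {a..<b}" "G2 \<subseteq> {a..<b}" using R by (auto simp: G1_def G2_def a_def b_def)
  have Isub: "{a..<b} \<subseteq> F" "{a..<b} \<subseteq> UF" "{a..<b} \<subseteq> UoF"
    using ab yN R by (auto simp: a_def b_def y_def F_def UF_def UoF_def)
  have Wsub: "?W \<subseteq> F" "?W \<subseteq> UF" "?W \<subseteq> UoF"
    using ab yN R by (auto simp: a_def b_def y_def F_def UF_def UoF_def)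
  have ww: "(X - G) \<inter> W = W - G" if "W \<subseteq> X" for X G W :: "nat set" using that by blast
  have ww0: "X \<inter> W = W" if "W \<subseteq> X" for X W :: "nat set" using that by blast
  have dd: "X - G - I = X - I" if "G \<subseteq> I" for X G I :: "nat set" using that by blast
  have innsum: "Mseg V0 a b = Mseg V1 a b + Mseg V2 a b"
    if "V0 \<inter> {a..<b} = {a..<b}" "V1 \<inter> {a..<b} = {a..<b} - G1" "V2 \<inter> {a..<b} = {a..<b} - G2" for V0 V1 V2
  proof -
    have h0: "Mseg V0 a b = Xm ^ (b - a)" by (rule Mseg_full_int[OF that(1)])
    have q1: "V1 \<inter> {a..<b} = {a..<b} - {y..<y + 2}" using that(2) by (simp add: G1_def)
    have q2: "V2 \<inter> {a..<b} = {a..<b} - {y - 1..<y + 1}" using that(3) by (simp add: G2_def)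
    have h1: "Mseg V1 a b = Xm ^ (y - a) * P0 * Xm ^ (b - (y + 2))"
      using R by (intro Mseg_fef_int[OF q1]) (auto simp: a_def b_def)
    have h2: "Mseg V2 a b = Xm ^ (y - 1 - a) * P0 * Xm ^ (b - (y + 1))"
      using R by (intro Mseg_fef_int[OF q2]) (auto simp: a_def b_def y_def)
    have e0: "even (b - a)"
    proof -
      have "b - a = 2 * (R + 1)" by (simp add: a_def b_def y_def)
      then show ?thesis by simp
    qed
    have e1: "y - a = R" "b - (y + 2) = R" "y - 1 - a = R - 1" "b - (y + 1) = R + 1" using R
      by (auto simp: a_def b_def y_def)
    show ?thesis
    proof (cases "even R")
      case True
      have o: "odd (R - 1)" "odd (R + 1)" using True R by auto
      show ?thesis unfolding h0 h1 h2 e1 Xm_even[OF e0] Xm_even[OF True] Xm_odd[OF o(1)] Xm_odd[OF o(2)]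
        using XP0X P0_P1 by simp
    next
      case False
      have o: "even (R - 1)" "even (R + 1)" using False R by auto
      show ?thesis unfolding h0 h1 h2 e1 Xm_even[OF e0] Xm_odd[OF False] Xm_even[OF o(1)] Xm_even[OF o(2)]
        using XP0X P0_P1 by (simp add: add.commute)
    qed
  qed
  have mW0: "Mseg C0 (a - R) (b + R) = 1"
  proof -
    have e: "even (b + R - (a - R))" using ab by (simp add: a_def b_def)
    show ?thesis unfolding C0_def by (subst Mseg_full_int) (auto simp: Xm_even[OF e])
  qed
  have mW1: "Mseg C1 (a - R) (b + R) = P0"
  proof -
    have h: "Mseg C1 (a - R) (b + R) = Xm ^ (y - (a - R)) * P0 * Xm ^ (b + R - (y + 2))"
      using ab by (intro Mseg_fef_int) (auto simp: C1_def G1_def a_def b_def)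
    have e: "even (y - (a - R))" "even (b + R - (y + 2))" using ab by (auto simp: a_def b_def)
    show ?thesis unfolding h Xm_even[OF e(1)] Xm_even[OF e(2)] by simp
  qed
  have mW2: "Mseg C2 (a - R) (b + R) = P1"
  proof -
    have h: "Mseg C2 (a - R) (b + R) = Xm ^ (y - 1 - (a - R)) * P0 * Xm ^ (b + R - (y + 1))"
      using ab R by (intro Mseg_fef_int) (auto simp: C2_def G2_def a_def b_def y_def)
    have e: "odd (y - 1 - (a - R))" "odd (b + R - (y + 1))" using ab R by (auto simp: a_def b_def y_def)
    show ?thesis unfolding h Xm_odd[OF e(1)] Xm_odd[OF e(2)] by (rule XP0X)
  qed
  have cnt_of: "cnt N V = tr (Mseg C (a - R) (b + R) * Oseg V (a - R) (b + R) N)" if "V \<inter> ?W = C" for V C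
  proof -
    have "cnt N V = tr (Mseg V (a - R) (b + R) * Oseg V (a - R) (b + R) N)" using ab by (intro cnt_split) auto
    also have "Mseg V (a - R) (b + R) = Mseg C (a - R) (b + R)" using that by (intro Mseg_cong) auto
    finally show ?thesis .
  qed
  have ev1: "even (N - (b + R))" using ey yN ab N by (auto simp: b_def)
  have oF: "Oseg V (a - R) (b + R) N = 1" if "V - {a..<b} = F - {a..<b}" for V
  proof -
    have "Oseg V (a - R) (b + R) N = Oseg F (a - R) (b + R) N" by (rule Oseg_diff_cong[OF that]) auto
    also have "\<dots> = 1"
    proof -
      have h1: "Mseg F (b + R) N = Xm ^ (N - (b + R))" using ab by (intro Mseg_full) (auto simp: F_def)
      have h2: "Mseg F 0 (a - R) = Xm ^ (a - R - 0)" using ab by (intro Mseg_full) (auto simp: F_def y_def)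
      have e2: "even (a - R - 0)" using ab ey by (simp add: a_def)
      show ?thesis unfolding Oseg_def h1 h2 Xm_even[OF ev1] Xm_even[OF e2] by simp
    qed
    finally show ?thesis .
  qed
  have oU: "Oseg V (a - R) (b + R) N = P0" if "V - {a..<b} = UF - {a..<b}" for V
  proof -
    have "Oseg V (a - R) (b + R) N = Oseg UF (a - R) (b + R) N" by (rule Oseg_diff_cong[OF that]) auto
    also have "\<dots> = P0"
    proof -
      have h1: "Mseg UF (b + R) N = Xm ^ (N - (b + R))" using ab by (intro Mseg_full) (auto simp: UF_def a_def b_def y_def)
      have h2: "Mseg UF 0 (a - R) = P0 * Xm ^ (a - R - (2 * R + 4))"
        using ab by (intro Mseg_ef) (auto simp: UF_def a_def y_def)
      have e2: "even (a - R - (2 * R + 4))" using ab by (simp add: a_def y_def)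
      show ?thesis unfolding Oseg_def h1 h2 Xm_even[OF ev1] Xm_even[OF e2] by simp
    qed
    finally show ?thesis .
  qed
  have oUo: "Oseg V (a - R) (b + R) N = P1" if "V - {a..<b} = UoF - {a..<b}" for V
  proof -
    have "Oseg V (a - R) (b + R) N = Oseg UoF (a - R) (b + R) N" by (rule Oseg_diff_cong[OF that]) auto
    also have "\<dots> = P1"
    proof -
      have h1: "Mseg UoF (b + R) N = Xm ^ (N - 1 - (b + R)) * P0" using ab yN by (intro Mseg_fe) (auto simp: UoF_def a_def b_def y_def)
      have h2: "Mseg UoF 0 (a - R) = P0 * Xm ^ (a - R - (2 * R + 5))"
        using ab R yN by (intro Mseg_ef) (auto simp: UoF_def a_def y_def)
      have e2: "odd (a - R - (2 * R + 5))" using ab by (simp add: a_def y_def)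
      have lt: "b + R < N" using yN by (simp add: b_def)
      have e1: "odd (N - 1 - (b + R))" using ev1 lt by presburger
      have "Xm * P0 * (P0 * Xm) = Xm * (P0 * P0) * Xm" by (simp only: mult.assoc)
      also have "\<dots> = P1" by (simp only: P0_sq XP0X)
      finally have "Xm * P0 * (P0 * Xm) = P1" .
      then show ?thesis unfolding Oseg_def h1 h2 Xm_odd[OF e1] Xm_odd[OF e2] by simp
    qed
    finally show ?thesis .
  qed
  define Xi where "Xi = (\<lambda>Om. Near N c a b R C0 Om - Near N c a b R C1 Om - Near N c a b R C2 Om)"
  have triple: "E (p + 1) * cnt N V0 - E p * cnt N V1 - E p * cnt N V2 = Xi (Oseg V0 (a - R) (b + R) N)"
    if X: "X \<subseteq> {..<N}" "{a..<b} \<subseteq> X" "?W \<subseteq> X"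
      and V: "V0 = X" "V1 = X - G1" "V2 = X - G2"
      and card: "card V1 = 2 * p" "card V2 = 2 * p" "card V0 = 2 * p + 2" "2 * p + 2 \<le> N" for X V0 V1 V2 p
  proof -
    have s: "V0 \<subseteq> {..<N}" "V1 \<subseteq> {..<N}" "V2 \<subseteq> {..<N}" using X V by auto
    have d: "V1 - {a..<b} = V0 - {a..<b}" "V2 - {a..<b} = V0 - {a..<b}" unfolding V dd[OF Gs(1)] dd[OF Gs(2)] by simp_all
    have i: "Mseg V0 a b = Mseg V1 a b + Mseg V2 a b" unfolding V by (intro innsum ww ww0 X)
    have w: "V0 \<inter> ?W = C0" "V1 \<inter> ?W = C1" "V2 \<inter> ?W = C2" unfolding V C0_def C1_def C2_def by (intro ww ww0 X)+
    show ?thesis using GLb[OF lr R ab eig s d i card] w by (simp add: Xi_def)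
  qed
  have cardX: "card (X - G) = card X - 2" if "G \<subseteq> X" "finite X" "card G = 2" for X G :: "nat set"
    using that by (simp add: card_Diff_subset finite_subset)
  have cG: "card G1 = 2" "card G2 = 2" using R by (auto simp: G1_def G2_def y_def)
  have XG: "G1 \<subseteq> {a..<b}" "G2 \<subseteq> {a..<b}" by (rule Gs)+
  have GF: "G1 \<subseteq> F" "G2 \<subseteq> F" "G1 \<subseteq> UF" "G2 \<subseteq> UF" "G1 \<subseteq> UoF" "G2 \<subseteq> UoF"
    using XG Isub by blast+
  have fin: "finite F" "finite UF" "finite UoF" by (simp_all add: F_def UF_def UoF_def)
  have cdF: "card (F - G1) = card F - 2" "card (F - G2) = card F - 2"
    "card (UF - G1) = card UF - 2" "card (UF - G2) = card UF - 2"
    "card (UoF - G1) = card UoF - 2" "card (UoF - G2) = card UoF - 2"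
    using cardX[OF GF(1) fin(1) cG(1)] cardX[OF GF(2) fin(1) cG(2)] cardX[OF GF(3) fin(2) cG(1)]
      cardX[OF GF(4) fin(2) cG(2)] cardX[OF GF(5) fin(3) cG(1)] cardX[OF GF(6) fin(3) cG(2)] by simp_all
  have subN: "F \<subseteq> {..<N}" "UF \<subseteq> {..<N}" "UoF \<subseteq> {..<N}" by (auto simp: F_def UF_def UoF_def)
  define pT where "pT = (N - 2) div 2"
  have topeq: "E (pT + 1) * cnt N F - E pT * cnt N (F - G1) - E pT * cnt N (F - G2) = Xi 1"
  proof -
    have c0: "card F = 2 * pT + 2" using N by (auto simp: F_def pT_def)
    have c1: "card (F - G1) = 2 * pT" and c2: "card (F - G2) = 2 * pT"
      using cdF N by (auto simp: F_def pT_def)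
    have le: "2 * pT + 2 \<le> N" using N by (auto simp: pT_def)
    have "E (pT + 1) * cnt N F - E pT * cnt N (F - G1) - E pT * cnt N (F - G2) = Xi (Oseg F (a - R) (b + R) N)"
      using c1 c2 c0 le by (rule triple[OF subN(1) Isub(1) Wsub(1) refl refl refl])
    then show ?thesis using oF[of F] by simp
  qed
  have cT: "cnt N F = 2" "cnt N (F - G1) = 1" "cnt N (F - G2) = 1"
  proof -
    have w: "F \<inter> ?W = C0" "(F - G1) \<inter> ?W = C1" "(F - G2) \<inter> ?W = C2"
      unfolding C0_def C1_def C2_def by (intro ww ww0 Wsub)+
    have o: "Oseg F (a - R) (b + R) N = 1" "Oseg (F - G1) (a - R) (b + R) N = 1" "Oseg (F - G2) (a - R) (b + R) N = 1"
      using oF[of F] oF[of "F - G1"] oF[of "F - G2"] dd[OF Gs(1)] dd[OF Gs(2)] by simp_all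
    show "cnt N F = 2" "cnt N (F - G1) = 1" "cnt N (F - G2) = 1"
      unfolding cnt_of[OF w(1)] cnt_of[OF w(2)] cnt_of[OF w(3)] o mW0 mW1 mW2
      by (simp_all add: tr_def P0_def P1_def)
  qed
  define pU where "pU = (N - 2 * R - 6) div 2"
  have cardUF: "card UF = 2 * pU + 2" "card (UF - G1) = 2 * pU" "card (UF - G2) = 2 * pU" "2 * pU + 2 \<le> N"
    using cdF N by (auto simp: UF_def pU_def)
  have medeq: "E (pU + 1) * cnt N UF - E pU * cnt N (UF - G1) - E pU * cnt N (UF - G2) = Xi P0"
  proof -
    have "E (pU + 1) * cnt N UF - E pU * cnt N (UF - G1) - E pU * cnt N (UF - G2) = Xi (Oseg UF (a - R) (b + R) N)"
      using cardUF(2,3,1,4) by (rule triple[OF subN(2) Isub(2) Wsub(2) refl refl refl])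
    then show ?thesis using oU[of UF] by simp
  qed
  have cU: "cnt N UF = 1" "cnt N (UF - G1) = 1" "cnt N (UF - G2) = 0"
  proof -
    have w: "UF \<inter> ?W = C0" "(UF - G1) \<inter> ?W = C1" "(UF - G2) \<inter> ?W = C2"
      unfolding C0_def C1_def C2_def by (intro ww ww0 Wsub)+
    have o: "Oseg UF (a - R) (b + R) N = P0" "Oseg (UF - G1) (a - R) (b + R) N = P0" "Oseg (UF - G2) (a - R) (b + R) N = P0"
      using oU[of UF] oU[of "UF - G1"] oU[of "UF - G2"] dd[OF Gs(1)] dd[OF Gs(2)] by simp_all
    show "cnt N UF = 1" "cnt N (UF - G1) = 1" "cnt N (UF - G2) = 0"
      unfolding cnt_of[OF w(1)] cnt_of[OF w(2)] cnt_of[OF w(3)] o mW0 mW1 mW2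
      by (simp_all add: tr_def P0_def P1_def)
  qed
  define pO where "pO = (N - 2 * R - 8) div 2"
  have pOe: "2 * pO = N - 2 * R - 8"
  proof -
    have "even (N - 2 * R - 8)" using N by simp
    then show ?thesis by (simp add: pO_def)
  qed
  have cu: "card UoF = N - 2 * R - 6" using N by (simp add: UoF_def)
  have cardUoF: "card UoF = 2 * pO + 2" "card (UoF - G1) = 2 * pO" "card (UoF - G2) = 2 * pO" "2 * pO + 2 \<le> N"
    using cdF(5,6) cu pOe N by simp_all
  have oddeq: "E (pO + 1) * cnt N UoF - E pO * cnt N (UoF - G1) - E pO * cnt N (UoF - G2) = Xi P1"
  proof -
    have "E (pO + 1) * cnt N UoF - E pO * cnt N (UoF - G1) - E pO * cnt N (UoF - G2) = Xi (Oseg UoF (a - R) (b + R) N)"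
      using cardUoF(2,3,1,4) by (rule triple[OF subN(3) Isub(3) Wsub(3) refl refl refl])
    then show ?thesis using oUo[of UoF] by simp
  qed
  have cUo: "cnt N UoF = 1" "cnt N (UoF - G1) = 0" "cnt N (UoF - G2) = 1"
  proof -
    have w: "UoF \<inter> ?W = C0" "(UoF - G1) \<inter> ?W = C1" "(UoF - G2) \<inter> ?W = C2"
      unfolding C0_def C1_def C2_def by (intro ww ww0 Wsub)+
    have o: "Oseg UoF (a - R) (b + R) N = P1" "Oseg (UoF - G1) (a - R) (b + R) N = P1" "Oseg (UoF - G2) (a - R) (b + R) N = P1"
      using oUo[of UoF] oUo[of "UoF - G1"] oUo[of "UoF - G2"] dd[OF Gs(1)] dd[OF Gs(2)] by simp_all
    show "cnt N UoF = 1" "cnt N (UoF - G1) = 0" "cnt N (UoF - G2) = 1"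
      unfolding cnt_of[OF w(1)] cnt_of[OF w(2)] cnt_of[OF w(3)] o mW0 mW1 mW2
      by (simp_all add: tr_def P0_def P1_def)
  qed
  have spU: "E (pU + 1) - E pU = nu N c R R {R + 1, R + 2} - nu N c R R {}"
  proof (rule sparse[OF lr R _ _ eig _ _ cardUF(2) cardUF(4)])
    show "R \<le> R" by simp
    show "R + 4 + R \<le> N" using N by simp
    show "UF - G1 \<subseteq> {..<N}" by (auto simp: UF_def)
    show "(UF - G1) \<inter> {R - R..<R + 4 + R} = {}" by (auto simp: UF_def)
    show "cnt N (UF - G1) \<noteq> 0" using cU by simp
  qed
  have spO: "E (pO + 1) - E pO = nu N c R R {R + 1, R + 2} - nu N c R R {}"
  proof (rule sparse[OF lr R _ _ eig _ _ cardUoF(3) cardUoF(4)])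
    show "R \<le> R" by simp
    show "R + 4 + R \<le> N" using N by simp
    show "UoF - G2 \<subseteq> {..<N}" by (auto simp: UoF_def)
    show "(UoF - G2) \<inter> {R - R..<R + 4 + R} = {}" by (auto simp: UoF_def)
    show "cnt N (UoF - G2) \<noteq> 0" using cUo by simp
  qed
  have Xi_add: "Xi 1 = Xi P0 + Xi P1"
    unfolding Xi_def P0_P1[symmetric] Near_add by simp
  have "2 * (E (pT + 1) - E pT) = Xi 1" using topeq cT by (simp add: algebra_simps)
  also have "\<dots> = (E (pU + 1) - E pU) + (E (pO + 1) - E pO)"
    using Xi_add medeq oddeq cU cUo by simp
  finally have "2 * (E (pT + 1) - E pT) = 2 * (nu N c R R {R + 1, R + 2} - nu N c R R {})" using spU spO by simp
  then have "E (pT + 1) - E pT = nu N c R R {R + 1, R + 2} - nu N c R R {}"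
    by (simp only: mult_cancel_left) simp
  then show ?thesis by (simp add: pT_def)
qed

lemma sparse_block:
  assumes lr: "local_range N k R c" and R: "0 < R" and eig: "eigP N c E"
    and p: "2 * p + 2 * R + 4 \<le> N" "2 * p + 2 \<le> N"
  shows "E (p + 1) - E p = nu N c R R {R + 1, R + 2} - nu N c R R {}"
proof -
  define V where "V = {2 * R + 4..<2 * R + 4 + 2 * p}"
  have cV: "card V = 2 * p" by (simp add: V_def)
  have m1: "Mseg V 0 (2 * R + 4 + 2 * p) = P0 * Xm ^ (2 * R + 4 + 2 * p - (2 * R + 4))"
    by (intro Mseg_ef) (auto simp: V_def)
  have m1': "Mseg V 0 (2 * R + 4 + 2 * p) = P0"
  proof -
    have e: "even (2 * R + 4 + 2 * p - (2 * R + 4))" by simp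
    show ?thesis unfolding m1 Xm_even[OF e] by simp
  qed
  have cnt: "cnt N V = 1"
  proof (cases "2 * R + 4 + 2 * p < N")
    case True
    have "Mseg V 0 N = Mseg V 0 (2 * R + 4 + 2 * p) * Mseg V (2 * R + 4 + 2 * p) N"
      using True by (intro Mseg_split) auto
    also have "Mseg V (2 * R + 4 + 2 * p) N = P0" using True by (intro Mseg_emp) (auto simp: V_def)
    finally show ?thesis using m1' by (simp add: cnt_def P0_sq tr_def P0_def)
  next
    case False
    then have "N = 2 * R + 4 + 2 * p" using p by simp
    then show ?thesis using m1' by (simp add: cnt_def tr_def P0_def)
  qed
  show ?thesis
  proof (rule sparse[OF lr R _ _ eig _ _ cV p(2)])
    show "R \<le> R" by simp
    show "R + 4 + R \<le> N" using p by simp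
    show "V \<subseteq> {..<N}" using p by (auto simp: V_def)
    show "V \<inter> {R - R..<R + 4 + R} = {}" by (auto simp: V_def)
    show "cnt N V \<noteq> 0" using cnt by simp
  qed
qed

lemma all_steps:
  assumes lr: "local_range N k R c" and R: "0 < R" and eig: "eigP N c E"
    and N: "10 * R + 20 \<le> N" and p: "2 * p + 2 \<le> N"
  shows "E (p + 1) - E p = nu N c R R {R + 1, R + 2} - nu N c R R {}"
proof (cases "2 * p + 2 * R + 4 \<le> N")
  case True then show ?thesis using sparse_block[OF lr R eig True p] by simp
next
  case False
  define g where "g = N - 2 * p"
  have g: "g \<le> 2 * R + 3" "2 \<le> g" "even (N - g)" "(N - g) div 2 = p" using False p by (auto simp: g_def)
  show ?thesis
  proof (cases "g = 2")
    case True
    then have "N = 2 * p + 2" using p by (simp add: g_def)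
    then have "even N" by simp
    then show ?thesis using last_step[OF lr R eig N] g True by simp
  next
    case False
    then have "3 \<le> g" using g by simp
    then show ?thesis using dense_step[OF lr R eig N \<open>3 \<le> g\<close> g(1) g(3)] g(4) by simp
  qed
qed

theorem corollary1:
  fixes k R :: nat
  assumes "0 < k" and "0 < R"
  shows "\<exists>N0::nat. \<forall>N > N0. \<forall>(c :: nat set \<Rightarrow> nat set \<Rightarrow> complex) (E :: nat \<Rightarrow> complex).
           local_range N k R c \<and>
           (\<forall>p \<le> Lmax N. op_of N c (Qst N p) = (\<lambda>T. E p * Qst N p T))
           \<longrightarrow> (\<exists>\<Omega> \<omega> :: complex. \<forall>p \<le> Lmax N. E p = \<Omega> + \<omega> * of_nat p)"
proof (intro exI[of _ "10 * R + 20"] allI impI, elim conjE)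
  fix N :: nat and c :: "nat set \<Rightarrow> nat set \<Rightarrow> complex" and E :: "nat \<Rightarrow> complex"
  assume N: "10 * R + 20 < N" and lr: "local_range N k R c"
    and ev: "\<forall>p \<le> Lmax N. op_of N c (Qst N p) = (\<lambda>T. E p * Qst N p T)"
  have N2: "N \<ge> 2" using N by simp
  have eig: "eigP N c E" unfolding eigP_def using eigen_Fc[OF N2 ev] by blast
  define \<omega> where "\<omega> = nu N c R R {R + 1, R + 2} - nu N c R R {}"
  have step: "E (p + 1) = E p + \<omega>" if "2 * p + 2 \<le> N" for p
    using all_steps[OF lr assms(2) eig _ that] N by (simp add: \<omega>_def algebra_simps)
  have lin: "E p = E 0 + \<omega> * of_nat p" if "2 * p \<le> N" for p
    using that
  proof (induction p)
    case 0 then show ?case by simp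
  next
    case (Suc p)
    then have "E (p + 1) = E p + \<omega>" using step by simp
    then show ?case using Suc by (simp add: algebra_simps)
  qed
  show "\<exists>\<Omega> \<omega>. \<forall>p \<le> Lmax N. E p = \<Omega> + \<omega> * of_nat p"
  proof (intro exI allI impI)
    fix p assume "p \<le> Lmax N"
    then have "2 * p \<le> N" using Lmax_eq[OF N2] by simp
    then show "E p = E 0 + \<omega> * of_nat p" by (rule lin)
  qed
qed

end
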